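(* Let $g\colon X\to\mathcal Q^{\vartriangle}$ be improper, closed and convex. Then for every $x\in X$, $$g(x)=\bigcap\{S_{(\hat x^*,r,z^* )}(x):\ (\hat x^*,r,z^* )\in\hat X^*\times\mathbb R\times(C^-\setminus\{0\}),\ S_{(\hat x^*,r,z^* )}(y)\supseteq g(y)\ \forall y\in X\}.$$ In particular, if $g\not\equiv Z$, then there exist $x^*\in X^*\setminus\{0\}$, $z^*\in C^-\setminus\{0\}$ and $r\in\mathbb R$ such that $S_{(\hat x^*,r,z^* )}(x)\supseteq g(x)$ for all $x\in X$.
   Context: $X,Z$ are separated locally convex spaces with duals $X^*,Z^*$; $C\subseteq Z$ is a convex cone with $0\in C$, $C^-=\{z^*\in Z^*: z^*(z)\leq0\ \forall z\in C\}$, assumed $\neq\{0\}$. $\mathcal Q^{\vartriangle}=\{A\subseteq Z: A=\operatorname{cl}\operatorname{co}(A+C)\}$ (contains $\emptyset$). For $g\colon X\to\mathcal Q^{\vartriangle}$: $\operatorname{gr}g=\{(x,z): z\in g(x)\}$, $\operatorname{dom}g=\{x: g(x)\neq\emptyset\}$; $g$ is convex (closed) iff $\operatorname{gr}g$ is convex (closed); $g$ is proper if $\operatorname{dom}g\neq\emptyset$ and $g(x)\neq Z$ for all $x$, improper otherwise. For $x^*\in X^*$, $r\in\mathbb R$: $x^*_r(x)=x^*(x)-r$, $\hat x^*_r(x)=-\infty$ if $x^*(x)\leq r$ and $+\infty$ otherwise; $\hat x^*=\hat x^*_0$, $\hat X^*=\{\hat x^*: x^*\in X^*\}$, $X^{\vartriangle}=X^*\cup\hat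 X^*$; $\xi_r=x^*_r$ if $\xi=x^*$ and $\xi_r=\hat x^*_r$ if $\xi=\hat x^*$. For $\xi\in X^{\vartriangle}$, $r\in\mathbb R$, $z^*\in C^-$, the conaffine function $S_{(\xi,r,z^* )}\colon X\to\mathcal Q^{\vartriangle}$ is $S_{(\xi,r,z^* )}(x)=\{z\in Z: \xi_r(x)\leq -z^*(z)\}$ (with the usual order on $\overline{\mathbb R}=\mathbb R\cup\{\pm\infty\}$). *)

theory Defs
  imports "HOL-Analysis.Analysis"
begin

text \<open>Separated locally convex (real) topological vector space structure on a type.
  Separation is imposed through the class t2_space in the statement.\<close>
definition lcs :: "('a::{real_vector,topological_space}) itself \<Rightarrow> bool" where
  "lcs _ \<longleftrightarrow>
     continuous_on UNIV (\<lambda>p::'a \<times> 'a. fst p + snd p) \<and>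
     continuous_on UNIV (\<lambda>p::real \<times> 'a. fst p *\<^sub>R snd p) \<and>
     (\<forall>U::'a set. open U \<and> 0 \<in> U \<longrightarrow> (\<exists>V. open V \<and> convex V \<and> 0 \<in> V \<and> V \<subseteq> U))"

definition dual_space :: "('a::{real_vector,topological_space} \<Rightarrow> real) set" where
  "dual_space = {f. linear f \<and> continuous_on UNIV f}"

definition neg_dual_cone :: "('a::{real_vector,topological_space}) set \<Rightarrow> ('a \<Rightarrow> real) set" where
  "neg_dual_cone C = {zs \<in> dual_space. \<forall>z\<in>C. zs z \<le> 0}"

definition Qtri :: "('a::{real_vector,topological_space}) set \<Rightarrow> 'a set set" where
  "Qtri C = {A. A = closure (convex hull {a + c | a c. a \<in> A \<and> c \<in> C})}"

definition graph :: "('x \<Rightarrow> 'z set) \<Rightarrow> ('x \<times> 'z) set" where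
  "graph g = {(x, z). z \<in> g x}"

definition dom_sv :: "('x \<Rightarrow> 'z set) \<Rightarrow> 'x set" where
  "dom_sv g = {x. g x \<noteq> {}}"

definition proper_sv :: "('x \<Rightarrow> 'z set) \<Rightarrow> bool" where
  "proper_sv g \<longleftrightarrow> dom_sv g \<noteq> {} \<and> (\<forall>x. g x \<noteq> UNIV)"

text \<open>Elements of X-triangle = X^* \<union> hat X^*: Lin x* is x*, Hat x* is hat x*.\<close>
datatype 'x dual_tri = Lin "'x \<Rightarrow> real" | Hat "'x \<Rightarrow> real"

fun xi_r :: "'x dual_tri \<Rightarrow> real \<Rightarrow> 'x \<Rightarrow> ereal" where
  "xi_r (Lin xs) r x = ereal (xs x - r)"
| "xi_r (Hat xs) r x = (if xs x \<le> r then -\<infinity> else \<infinity>)"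

definition conaff :: "'x dual_tri \<Rightarrow> real \<Rightarrow> ('z \<Rightarrow> real) \<Rightarrow> 'x \<Rightarrow> 'z set" where
  "conaff xi r zs x = {z. xi_r xi r x \<le> ereal (- zs z)}"

end

theory Submission
  imports Defs "HOL-Analysis.Analysis"
begin


definition sublin :: "('a::real_vector \<Rightarrow> real) \<Rightarrow> bool" where
  "sublin p \<longleftrightarrow> (\<forall>x y. p (x+y) \<le> p x + p y) \<and> (\<forall>a x. a \<ge> 0 \<longrightarrow> p (a *\<^sub>R x) = a * p x)"

lemma sublin_0: "sublin p \<Longrightarrow> p 0 = 0"
  unfolding sublin_def by (metis mult_zero_left order_refl scale_zero_left)

lemma sublin_lb: assumes "sublin p" shows "- p (-x) \<le> p (x + y) - p y"
proof -
  have "p y \<le> p (x+y) + p (-x)" using assms unfolding sublin_def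
    by (metis add.commute add_diff_cancel_left' diff_conv_add_uminus)
  then show ?thesis by simp
qed

lemma sublin_neg: "sublin p \<Longrightarrow> - p (-x) \<le> p x"
  using sublin_lb[of p x 0] by (simp add: sublin_0)

definition Tfun :: "('a::real_vector \<Rightarrow> real) \<Rightarrow> 'a \<Rightarrow> real \<Rightarrow> 'a \<Rightarrow> real" where
  "Tfun q y c x = Inf ((\<lambda>t. q (x + t *\<^sub>R y) - t * c) ` {0..})"

lemma Tfun_props:
  assumes q: "sublin q" and c: "c \<le> q y"
  shows "sublin (Tfun q y c)" "\<And>x. Tfun q y c x \<le> q x" "Tfun q y c (-y) \<le> -c"
    "\<And>x. - q (-x) \<le> Tfun q y c x"
proof -
  have hom: "\<And>a x. a \<ge> 0 \<Longrightarrow> q (a *\<^sub>R x) = a * q x" and sub: "\<And>x y. q (x+y) \<le> q x + q y"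
    using q unfolding sublin_def by auto
  have lb: "- q (-x) \<le> q (x + t *\<^sub>R y) - t * c" if "t \<ge> 0" for x t
  proof -
    have "- q (-x) \<le> q (x + t *\<^sub>R y) - q (t *\<^sub>R y)" by (rule sublin_lb[OF q])
    also have "q (t *\<^sub>R y) = t * q y" using hom that by simp
    also have "t * c \<le> t * q y" using c that by (simp add: mult_left_mono)
    ultimately show ?thesis by linarith
  qed
  have bdd: "bdd_below ((\<lambda>t. q (x + t *\<^sub>R y) - t * c) ` {0..})" for x
    using lb by (auto intro!: bdd_belowI2)
  have le: "Tfun q y c x \<le> q (x + t *\<^sub>R y) - t * c" if "t \<ge> 0" for x t
    unfolding Tfun_def using that by (intro cInf_lower[OF _ bdd]) auto
  have ge: "b \<le> Tfun q y c x" if "\<And>t. t \<ge> 0 \<Longrightarrow> b \<le> q (x + t *\<^sub>R y) - t * c" for b x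
    unfolding Tfun_def using that by (intro cInf_greatest) auto
  show "Tfun q y c x \<le> q x" for x using le[of 0 x] by simp
  show "Tfun q y c (-y) \<le> -c" using le[of 1 "-y"] by (simp add: sublin_0[OF q])
  show lbT: "- q (-x) \<le> Tfun q y c x" for x by (rule ge) (rule lb)
  have subT: "Tfun q y c (x1 + x2) \<le> Tfun q y c x1 + Tfun q y c x2" for x1 x2
  proof -
    have "Tfun q y c (x1 + x2) - (q (x2 + t2 *\<^sub>R y) - t2 * c) \<le> Tfun q y c x1" if t2: "t2 \<ge> 0" for t2
    proof (rule ge)
      fix t1 :: real assume t1: "t1 \<ge> 0"
      have "Tfun q y c (x1 + x2) \<le> q ((x1+x2) + (t1+t2) *\<^sub>R y) - (t1+t2) * c"
        using t1 t2 by (intro le) simp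
      also have "(x1+x2) + (t1+t2) *\<^sub>R y = (x1 + t1 *\<^sub>R y) + (x2 + t2 *\<^sub>R y)"
        by (simp add: algebra_simps)
      also have "q \<dots> \<le> q (x1 + t1 *\<^sub>R y) + q (x2 + t2 *\<^sub>R y)" by (rule sub)
      finally show "Tfun q y c (x1 + x2) - (q (x2 + t2 *\<^sub>R y) - t2 * c) \<le> q (x1 + t1 *\<^sub>R y) - t1 * c"
        by (simp add: algebra_simps)
    qed
    then have "Tfun q y c (x1 + x2) - Tfun q y c x1 \<le> Tfun q y c x2"
      by (intro ge) (simp add: algebra_simps)
    then show ?thesis by simp
  qed
  have homle: "Tfun q y c (a *\<^sub>R x) \<le> a * Tfun q y c x" if a: "a > 0" for a x
  proof -
    have "Tfun q y c (a *\<^sub>R x) / a \<le> Tfun q y c x"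
    proof (rule ge)
      fix s :: real assume s: "s \<ge> 0"
      have "Tfun q y c (a *\<^sub>R x) \<le> q (a *\<^sub>R x + (a * s) *\<^sub>R y) - (a * s) * c"
        using s a by (intro le) simp
      also have "a *\<^sub>R x + (a * s) *\<^sub>R y = a *\<^sub>R (x + s *\<^sub>R y)" by (simp add: algebra_simps)
      also have "q \<dots> = a * q (x + s *\<^sub>R y)" using hom a by simp
      finally show "Tfun q y c (a *\<^sub>R x) / a \<le> q (x + s *\<^sub>R y) - s * c"
        using a by (simp add: field_simps)
    qed
    then show ?thesis using a by (simp add: field_simps)
  qed
  have homT: "Tfun q y c (a *\<^sub>R x) = a * Tfun q y c x" if a: "a \<ge> 0" for a x
  proof (cases "a = 0")
    case True
    have "Tfun q y c 0 \<le> 0" using le[of 0 0] by (simp add: sublin_0[OF q])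
    moreover have "0 \<le> Tfun q y c 0" using lbT[of 0] by (simp add: sublin_0[OF q])
    ultimately show ?thesis using True by simp
  next
    case False
    then have a': "a > 0" using a by simp
    have "Tfun q y c x = Tfun q y c (inverse a *\<^sub>R (a *\<^sub>R x))" using a' by simp
    also have "\<dots> \<le> inverse a * Tfun q y c (a *\<^sub>R x)" using a' by (intro homle) simp
    finally have "a * Tfun q y c x \<le> Tfun q y c (a *\<^sub>R x)" using a' by (simp add: field_simps)
    then show ?thesis using homle[OF a', of x] by linarith
  qed
  show "sublin (Tfun q y c)" unfolding sublin_def using subT homT by auto
qed

lemma HB_sublin:
  fixes p :: "'a::real_vector \<Rightarrow> real"
  assumes p: "sublin p"
  shows "\<exists>h. linear h \<and> (\<forall>x. h x \<le> p x)"
proof -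
  define A where "A = {q. sublin q \<and> (\<forall>x. q x \<le> p x)}"
  define P where "P = (\<lambda>q1 q2 :: 'a \<Rightarrow> real. \<forall>x. q2 x \<le> q1 x)"
  have po: "partial_order_on A (relation_of P A)"
    unfolding partial_order_on_def preorder_on_def refl_on_def trans_def antisym_def relation_of_def P_def
    by (auto intro: order_trans) (meson antisym ext)
  have ch: "\<exists>u \<in> A. \<forall>a \<in> C. P a u" if C: "C \<in> Chains (relation_of P A)" for C
  proof (cases "C = {}")
    case True then show ?thesis using p by (auto simp: A_def)
  next
    case False
    have CA: "C \<subseteq> A" using C unfolding Chains_def relation_of_def
      by auto
    have cmp: "\<forall>x. q2 x \<le> q1 x \<or> (\<forall>x. q1 x \<le> q2 x)" if "q1 \<in> C" "q2 \<in> C" for q1 q2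
      using C that unfolding Chains_def relation_of_def P_def by blast
    have cmp': "(\<forall>x. q2 x \<le> q1 x) \<or> (\<forall>x. q1 x \<le> q2 x)" if "q1 \<in> C" "q2 \<in> C" for q1 q2
      using C that unfolding Chains_def relation_of_def P_def by blast
    have sl: "sublin q" "\<And>x. q x \<le> p x" if "q \<in> C" for q using CA that by (auto simp: A_def)
    define u where "u x = Inf ((\<lambda>q. q x) ` C)" for x
    have bdd: "bdd_below ((\<lambda>q. q x) ` C)" for x
      using sublin_neg[OF sl(1)] sl(2) by (intro bdd_belowI2[of _ "- p (-x)"]) (meson neg_le_iff_le order_trans)
    have ule: "u x \<le> q x" if "q \<in> C" for q x unfolding u_def using that bdd by (intro cInf_lower) auto
    have uge: "b \<le> u x" if "\<And>q. q \<in> C \<Longrightarrow> b \<le> q x" for b x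
      unfolding u_def using that False by (intro cInf_greatest) auto
    have usub: "u (x + y) \<le> u x + u y" for x y
    proof -
      have "u (x+y) - q2 y \<le> u x" if q2: "q2 \<in> C" for q2
      proof (rule uge)
        fix q1 assume q1: "q1 \<in> C"
        from cmp'[OF q1 q2] show "u (x + y) - q2 y \<le> q1 x"
        proof
          assume le: "\<forall>x. q2 x \<le> q1 x"
          have "u (x+y) \<le> q2 (x+y)" by (rule ule[OF q2])
          also have "\<dots> \<le> q2 x + q2 y" using sl(1)[OF q2] unfolding sublin_def by auto
          finally show ?thesis using le[rule_format, of x] by linarith
        next
          assume le: "\<forall>x. q1 x \<le> q2 x"
          have "u (x+y) \<le> q1 (x+y)" by (rule ule[OF q1])
          also have "\<dots> \<le> q1 x + q1 y" using sl(1)[OF q1] unfolding sublin_def by auto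
          finally show ?thesis using le[rule_format, of y] by linarith
        qed
      qed
      then have "u (x+y) - u x \<le> u y" by (intro uge) (simp add: algebra_simps)
      then show ?thesis by simp
    qed
    have homle: "u (a *\<^sub>R x) \<le> a * u x" if a: "a > 0" for a x
    proof -
      have "u (a *\<^sub>R x) / a \<le> u x"
      proof (rule uge)
        fix q assume q: "q \<in> C"
        have "u (a *\<^sub>R x) \<le> q (a *\<^sub>R x)" by (rule ule[OF q])
        also have "\<dots> = a * q x" using sl(1)[OF q] a unfolding sublin_def by auto
        finally show "u (a *\<^sub>R x) / a \<le> q x" using a by (simp add: field_simps)
      qed
      then show ?thesis using a by (simp add: field_simps)
    qed
    obtain q0 where q0: "q0 \<in> C" using False by blast
    have u0: "u 0 = 0"
    proof -
      have "u 0 \<le> 0" using ule[OF q0, of 0] sublin_0[OF sl(1)[OF q0]] by simp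
      moreover have "0 \<le> u 0" by (rule uge) (simp add: sublin_0[OF sl(1)])
      ultimately show ?thesis by simp
    qed
    have homu: "u (a *\<^sub>R x) = a * u x" if a: "a \<ge> 0" for a x
    proof (cases "a = 0")
      case True then show ?thesis using u0 by simp
    next
      case False
      then have a': "a > 0" using a by simp
      have "u x = u (inverse a *\<^sub>R (a *\<^sub>R x))" using a' by simp
      also have "\<dots> \<le> inverse a * u (a *\<^sub>R x)" using a' by (intro homle) simp
      finally have "a * u x \<le> u (a *\<^sub>R x)" using a' by (simp add: field_simps)
      then show ?thesis using homle[OF a', of x] by linarith
    qed
    have "u \<in> A" unfolding A_def sublin_def using usub homu ule[OF q0] sl(2)[OF q0]
      by (auto intro: order_trans[OF ule[OF q0] sl(2)[OF q0]])
    moreover have "\<forall>a \<in> C. P a u" unfolding P_def using ule by auto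
    ultimately show ?thesis by blast
  qed
  obtain m where mA: "m \<in> A" and mmin: "\<And>a. a \<in> A \<Longrightarrow> P m a \<Longrightarrow> a = m"
    using predicate_Zorn[OF po ch] by blast
  have ms: "sublin m" and mp: "\<And>x. m x \<le> p x" using mA by (auto simp: A_def)
  have mneg: "m (-y) = - m y" for y
  proof -
    note T = Tfun_props[OF ms, of "m y" y]
    have "Tfun m y (m y) \<in> A" unfolding A_def using T(1) T(2) mp by (auto intro: order_trans)
    moreover have "P m (Tfun m y (m y))" unfolding P_def using T(2) by auto
    ultimately have "Tfun m y (m y) = m" by (rule mmin)
    then have "m (-y) \<le> - m y" using T(3) by simp
    moreover have "m 0 \<le> m y + m (-y)" using ms unfolding sublin_def by (metis add.right_inverse)
    ultimately show ?thesis using sublin_0[OF ms] by linarith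
  qed
  have madd: "m (x + y) = m x + m y" for x y
  proof -
    have "m (x + y) \<le> m x + m y" using ms unfolding sublin_def by auto
    moreover have "m x \<le> m (x + y) + m (-y)" using ms unfolding sublin_def
      by (metis add_diff_cancel diff_conv_add_uminus)
    ultimately show ?thesis using mneg[of y] by linarith
  qed
  have mscale: "m (a *\<^sub>R x) = a * m x" for a x
  proof (cases "a \<ge> 0")
    case True then show ?thesis using ms unfolding sublin_def by auto
  next
    case False
    have "m (a *\<^sub>R x) = m (- ((-a) *\<^sub>R x))" by simp
    also have "\<dots> = - m ((-a) *\<^sub>R x)" by (rule mneg)
    also have "\<dots> = a * m x"
    proof -
      have "0 \<le> -a" using False by simp
      then have "m ((-a) *\<^sub>R x) = (-a) * m x" using ms unfolding sublin_def by blast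
      then show ?thesis by simp
    qed
    finally show ?thesis .
  qed
  have "linear m" by (rule linearI) (auto simp: madd mscale)
  then show ?thesis using mp by blast
qed

lemma HB_point:
  fixes p :: "'a::real_vector \<Rightarrow> real"
  assumes p: "sublin p" and y: "1 \<le> p y"
  shows "\<exists>h. linear h \<and> (\<forall>x. h x \<le> p x) \<and> 1 \<le> h y"
proof -
  note T = Tfun_props[OF p y]
  obtain h where h: "linear h" "\<And>x. h x \<le> Tfun p y 1 x" using HB_sublin[OF T(1)] by blast
  have "h (-y) \<le> -1" using h(2)[of "-y"] T(3) by linarith
  then have "1 \<le> h y" using linear_neg[OF h(1)] by fastforce
  then show ?thesis using h T(2) by (meson order_trans)
qed



lemma lcs_cont_add:
  fixes f g :: "'b::topological_space \<Rightarrow> 'a::{real_vector,topological_space}"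
  assumes L: "lcs TYPE('a)" and f: "continuous_on S f" and g: "continuous_on S g"
  shows "continuous_on S (\<lambda>t. f t + g t)"
proof -
  have c: "continuous_on UNIV (\<lambda>p::'a \<times> 'a. fst p + snd p)" using L unfolding lcs_def by blast
  show ?thesis using continuous_on_compose2[OF c continuous_on_Pair[OF f g]] by simp
qed

lemma lcs_cont_scale:
  fixes f :: "'b::topological_space \<Rightarrow> real" and g :: "'b \<Rightarrow> 'a::{real_vector,topological_space}"
  assumes L: "lcs TYPE('a)" and f: "continuous_on S f" and g: "continuous_on S g"
  shows "continuous_on S (\<lambda>t. f t *\<^sub>R g t)"
proof -
  have c: "continuous_on UNIV (\<lambda>p::real \<times> 'a. fst p *\<^sub>R snd p)" using L unfolding lcs_def by blast
  show ?thesis using continuous_on_compose2[OF c continuous_on_Pair[OF f g]] by simp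
qed

lemma lcs_cont_affine:
  fixes a b :: "'a::{real_vector,topological_space}"
  assumes L: "lcs TYPE('a)"
  shows "continuous_on UNIV (\<lambda>u. c *\<^sub>R u + b)"
  by (intro lcs_cont_add[OF L] lcs_cont_scale[OF L] continuous_on_const continuous_on_id)

lemma lcs_open_affine:
  fixes b :: "'a::{real_vector,topological_space}"
  assumes L: "lcs TYPE('a)" and U: "open U"
  shows "open {u. c *\<^sub>R u + b \<in> U}"
proof -
  have "{u. c *\<^sub>R u + b \<in> U} = (\<lambda>u. c *\<^sub>R u + b) -` U" by auto
  then show ?thesis using open_vimage[OF U lcs_cont_affine[OF L]] by simp
qed

lemma lcs_ray:
  fixes x :: "'a::{real_vector,topological_space}"
  assumes L: "lcs TYPE('a)" and U: "open U"
  shows "open {s::real. s *\<^sub>R x \<in> U}"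
proof -
  have "continuous_on UNIV (\<lambda>s::real. s *\<^sub>R x)"
    by (intro lcs_cont_scale[OF L] continuous_on_const continuous_on_id)
  from open_vimage[OF U this] show ?thesis by (simp add: vimage_def)
qed

lemma lcs_absorb:
  fixes x :: "'a::{real_vector,topological_space}"
  assumes L: "lcs TYPE('a)" and U: "open U" and U0: "0 \<in> U"
  shows "\<exists>s>0. s *\<^sub>R x \<in> U"
proof -
  have "open {s::real. s *\<^sub>R x \<in> U}" by (rule lcs_ray[OF L U])
  moreover have "0 \<in> {s::real. s *\<^sub>R x \<in> U}" using U0 by simp
  ultimately obtain e where e: "e > 0" "ball 0 e \<subseteq> {s::real. s *\<^sub>R x \<in> U}"
    using open_contains_ball by blast
  moreover have "e/2 \<in> ball 0 e" using e(1) by (simp add: dist_real_def)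
  ultimately have "(e/2) *\<^sub>R x \<in> U" by blast
  then show ?thesis using e(1) by (intro exI[of _ "e/2"]) auto
qed

definition mink :: "'a::real_vector set \<Rightarrow> 'a \<Rightarrow> real" where
  "mink W x = Inf {t. 0 < t \<and> inverse t *\<^sub>R x \<in> W}"

lemma mink_props:
  fixes W :: "'a::{real_vector,topological_space} set"
  assumes L: "lcs TYPE('a)" and W: "open W" "convex W" "0 \<in> W"
  shows "sublin (mink W)" "\<And>x. x \<in> W \<longleftrightarrow> mink W x < 1"
proof -
  let ?S = "\<lambda>x. {t. 0 < t \<and> inverse t *\<^sub>R x \<in> W}"
  have ne: "?S x \<noteq> {}" for x
  proof -
    obtain s where s: "s > 0" "s *\<^sub>R x \<in> W" using lcs_absorb[OF L W(1) W(3)] by blast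
    then have "inverse s \<in> ?S x" by simp
    then show ?thesis by blast
  qed
  have bdd: "bdd_below (?S x)" for x by (intro bdd_belowI[of _ 0]) auto
  have le: "mink W x \<le> t" if "t > 0" "inverse t *\<^sub>R x \<in> W" for x t
    unfolding mink_def using that bdd by (intro cInf_lower) auto
  have ge: "b \<le> mink W x" if "\<And>t. t > 0 \<Longrightarrow> inverse t *\<^sub>R x \<in> W \<Longrightarrow> b \<le> t" for b x
    unfolding mink_def using that ne by (intro cInf_greatest) auto
  have nn: "0 \<le> mink W x" for x by (rule ge) simp
  have homle: "mink W (a *\<^sub>R x) \<le> a * mink W x" if a: "a > 0" for a x
  proof -
    have "mink W (a *\<^sub>R x) / a \<le> mink W x"
    proof (rule ge)
      fix t assume t: "t > 0" "inverse t *\<^sub>R x \<in> W"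
      have eq: "inverse (a*t) *\<^sub>R (a *\<^sub>R x) = inverse t *\<^sub>R x" using a by (simp add: field_simps)
      have mem: "inverse (a*t) *\<^sub>R (a *\<^sub>R x) \<in> W" unfolding eq by (rule t(2))
      have "mink W (a *\<^sub>R x) \<le> a * t" using t a by (intro le[OF _ mem]) auto
      then show "mink W (a *\<^sub>R x) / a \<le> t" using a by (simp add: field_simps)
    qed
    then show ?thesis using a by (simp add: field_simps)
  qed
  have m0: "mink W 0 = 0"
  proof -
    have "mink W 0 \<le> (1/2) * mink W 0" using homle[of "1/2" 0] by simp
    then show ?thesis using nn[of 0] by linarith
  qed
  have hom: "mink W (a *\<^sub>R x) = a * mink W x" if a: "a \<ge> 0" for a x
  proof (cases "a = 0")
    case True then show ?thesis using m0 by simp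
  next
    case False
    then have a': "a > 0" using a by simp
    have "mink W x = mink W (inverse a *\<^sub>R (a *\<^sub>R x))" using a' by simp
    also have "\<dots> \<le> inverse a * mink W (a *\<^sub>R x)" using a' by (intro homle) simp
    finally have "a * mink W x \<le> mink W (a *\<^sub>R x)" using a' by (simp add: field_simps)
    then show ?thesis using homle[OF a', of x] by linarith
  qed
  have sub: "mink W (x + y) \<le> mink W x + mink W y" for x y
  proof -
    have key: "mink W (x + y) \<le> s + t" if s: "s > 0" "inverse s *\<^sub>R x \<in> W" and t: "t > 0" "inverse t *\<^sub>R y \<in> W" for s t
    proof (rule le)
      show "s + t > 0" using s t by simp
      have "(s/(s+t)) *\<^sub>R (inverse s *\<^sub>R x) + (t/(s+t)) *\<^sub>R (inverse t *\<^sub>R y) \<in> W"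
        using s t by (intro convexD[OF W(2)]) (simp_all add: add_divide_distrib[symmetric])
      also have "(s/(s+t)) *\<^sub>R (inverse s *\<^sub>R x) + (t/(s+t)) *\<^sub>R (inverse t *\<^sub>R y) = inverse (s+t) *\<^sub>R (x + y)"
      proof -
        have c1: "(s/(s+t)) * inverse s = inverse (s+t)" using s t by (simp add: field_simps)
        have c2: "(t/(s+t)) * inverse t = inverse (s+t)" using s t by (simp add: field_simps)
        show ?thesis by (simp only: scaleR_scaleR c1 c2 scaleR_add_right)
      qed
      finally show "inverse (s + t) *\<^sub>R (x + y) \<in> W" .
    qed
    have "mink W (x+y) - t \<le> mink W x" if t: "t > 0" "inverse t *\<^sub>R y \<in> W" for t
      by (rule ge) (use key t in force)
    then have "mink W (x+y) - mink W x \<le> mink W y" by (intro ge) force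
    then show ?thesis by simp
  qed
  show "sublin (mink W)" unfolding sublin_def using sub hom by auto
  show "x \<in> W \<longleftrightarrow> mink W x < 1" for x
  proof
    assume x: "x \<in> W"
    have "open {s::real. s *\<^sub>R x \<in> W}" by (rule lcs_ray[OF L W(1)])
    moreover have "1 \<in> {s::real. s *\<^sub>R x \<in> W}" using x by simp
    ultimately obtain e where e: "e > 0" "ball 1 e \<subseteq> {s::real. s *\<^sub>R x \<in> W}"
      using open_contains_ball by blast
    let ?s = "1 + e/2"
    have "?s \<in> ball 1 e" using e by (auto simp: dist_real_def)
    then have "?s *\<^sub>R x \<in> W" using e by auto
    then have "mink W x \<le> inverse ?s" using e by (intro le) auto
    also have "inverse ?s < 1" using e by (simp add: field_simps)
    finally show "mink W x < 1" .
  next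
    assume m: "mink W x < 1"
    obtain t where t: "t \<in> ?S x" "t < 1" using cInf_lessD[OF ne m[unfolded mink_def]] by blast
    then have "t *\<^sub>R (inverse t *\<^sub>R x) + (1 - t) *\<^sub>R 0 \<in> W"
      using W by (intro convexD) auto
    then show "x \<in> W" using t by simp
  qed
qed


lemma lin_cont:
  fixes W :: "'a::{real_vector,topological_space} set"
  assumes L: "lcs TYPE('a)" and W: "open W" "convex W" "0 \<in> W"
    and h: "linear h" and hb: "\<And>x. h x \<le> mink W x"
  shows "continuous_on UNIV h"
proof -
  note mp = mink_props[OF L W]
  have hv: "\<bar>h v\<bar> < 1" if "v \<in> W" "-v \<in> W" for v
  proof -
    have "h v < 1" using hb[of v] mp(2)[of v] that by linarith
    moreover have "h (-v) < 1" using hb[of "-v"] mp(2)[of "-v"] that by linarith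
    ultimately show ?thesis using linear_neg[OF h, of v] by linarith
  qed
  have "open (h -` B)" if B: "open B" for B
  proof (subst open_subopen, intro ballI)
    fix x assume x: "x \<in> h -` B"
    then obtain e where e: "e > 0" "\<And>y. dist y (h x) < e \<Longrightarrow> y \<in> B"
      using B unfolding open_dist by auto
    define T where "T = {u. (1/e) *\<^sub>R u + (-(1/e) *\<^sub>R x) \<in> W} \<inter> {u. (-(1/e)) *\<^sub>R u + ((1/e) *\<^sub>R x) \<in> W}"
    have "open T" unfolding T_def by (intro open_Int lcs_open_affine[OF L W(1)])
    moreover have "x \<in> T" unfolding T_def using W(3) by simp
    moreover have "T \<subseteq> h -` B"
    proof
      fix u assume u: "u \<in> T"
      define v where "v = (1/e) *\<^sub>R u + (-(1/e) *\<^sub>R x)"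
      have "-v = (-(1/e)) *\<^sub>R u + ((1/e) *\<^sub>R x)" unfolding v_def
        by (simp only: minus_add_distrib scaleR_minus_left minus_minus)
      moreover have u1: "(1/e) *\<^sub>R u + (-(1/e) *\<^sub>R x) \<in> W" and u2: "(-(1/e)) *\<^sub>R u + ((1/e) *\<^sub>R x) \<in> W"
        using u unfolding T_def by blast+
      ultimately have "v \<in> W" "-v \<in> W" unfolding v_def by metis+
      then have hv1: "\<bar>h v\<bar> < 1" by (rule hv)
      have hv2: "h v = (h u - h x) / e"
      proof -
        have "h v = (1/e) * h u + (-(1/e)) * h x"
          unfolding v_def using h by (simp add: linear_diff linear_cmul)
        moreover have "(h u - h x)/e = (1/e) * h u + (-(1/e)) * h x" by (simp add: diff_divide_distrib)
        ultimately show ?thesis by (rule trans[OF _ sym])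
      qed
      have "\<bar>(h u - h x) / e\<bar> < 1" using hv1 unfolding hv2 .
      then have "\<bar>h u - h x\<bar> / e < 1" using e(1) by (simp only: abs_divide abs_of_pos)
      then have "\<bar>h u - h x\<bar> < e" using e(1) by (simp add: pos_divide_less_eq)
      then have "dist (h u) (h x) < e" by (simp add: dist_real_def)
      then show "u \<in> h -` B" using e(2) by blast
    qed
    ultimately show "\<exists>T. open T \<and> x \<in> T \<and> T \<subseteq> h -` B" by blast
  qed
  then show ?thesis by (simp add: continuous_on_open_vimage[OF open_UNIV])
qed

lemma separation:
  fixes D :: "'a::{real_vector,topological_space} set"
  assumes L: "lcs TYPE('a)" and D: "closed D" "convex D" "d0 \<in> D" and x0: "x0 \<notin> D"
  shows "\<exists>h r. h \<in> dual_space \<and> (\<forall>d\<in>D. h d \<le> r) \<and> r < h x0"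
proof -
  define V0 where "V0 = {v. (-1) *\<^sub>R v + x0 \<in> - D}"
  have "open V0" unfolding V0_def using D(1) by (intro lcs_open_affine[OF L]) auto
  moreover have "0 \<in> V0" unfolding V0_def using x0 by simp
  ultimately obtain V where V: "open V" "convex V" "0 \<in> V" "V \<subseteq> V0"
    using L unfolding lcs_def by blast
  define W where "W = {d - d0 + v | d v. d \<in> D \<and> v \<in> V}"
  have Weq: "W = (\<Union>d\<in>D. {u. 1 *\<^sub>R u + (d0 - d) \<in> V})"
  proof (intro set_eqI iffI)
    fix u assume "u \<in> W"
    then obtain d v where "u = d - d0 + v" "d \<in> D" "v \<in> V" unfolding W_def by blast
    then have "1 *\<^sub>R u + (d0 - d) \<in> V" "d \<in> D" by simp_all
    then show "u \<in> (\<Union>d\<in>D. {u. 1 *\<^sub>R u + (d0 - d) \<in> V})" by blast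
  next
    fix u assume "u \<in> (\<Union>d\<in>D. {u. 1 *\<^sub>R u + (d0 - d) \<in> V})"
    then obtain d where "d \<in> D" "u + (d0 - d) \<in> V" by auto
    moreover have "u = d - d0 + (u + (d0 - d))" by simp
    ultimately show "u \<in> W" unfolding W_def by blast
  qed
  have Wo: "open W" unfolding Weq using V(1) by (intro open_UN ballI lcs_open_affine[OF L])
  have Wc: "convex W"
  proof (rule convexI)
    fix u1 u2 and a b :: real assume u: "u1 \<in> W" "u2 \<in> W" and ab: "0 \<le> a" "0 \<le> b" "a + b = 1"
    obtain d1 v1 where 1: "u1 = d1 - d0 + v1" "d1 \<in> D" "v1 \<in> V" using u(1) unfolding W_def by blast
    obtain d2 v2 where 2: "u2 = d2 - d0 + v2" "d2 \<in> D" "v2 \<in> V" using u(2) unfolding W_def by blast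
    have "a *\<^sub>R d1 + b *\<^sub>R d2 \<in> D" using 1 2 ab D(2) by (intro convexD) auto
    moreover have "a *\<^sub>R v1 + b *\<^sub>R v2 \<in> V" using 1 2 ab V(2) by (intro convexD) auto
    moreover have "a *\<^sub>R u1 + b *\<^sub>R u2 = (a *\<^sub>R d1 + b *\<^sub>R d2) - (a + b) *\<^sub>R d0 + (a *\<^sub>R v1 + b *\<^sub>R v2)"
      unfolding 1 2 by (simp add: algebra_simps)
    ultimately show "a *\<^sub>R u1 + b *\<^sub>R u2 \<in> W" unfolding W_def using ab(3) by auto
  qed
  have W0: "0 \<in> W" unfolding W_def using D(3) V(3) by force
  define y1 where "y1 = x0 - d0"
  have y1W: "y1 \<notin> W"
  proof
    assume "y1 \<in> W"
    then obtain d v where dv: "x0 - d0 = d - d0 + v" "d \<in> D" "v \<in> V" unfolding W_def y1_def by blast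
    then have "(-1) *\<^sub>R v + x0 = d" by (simp add: algebra_simps)
    moreover have "(-1) *\<^sub>R v + x0 \<in> - D" using V(4) dv(3) unfolding V0_def by blast
    ultimately show False using dv(2) by simp
  qed
  note mp = mink_props[OF L Wo Wc W0]
  have "1 \<le> mink W y1" using mp(2)[of y1] y1W by linarith
  then obtain h where h: "linear h" "\<And>x. h x \<le> mink W x" "1 \<le> h y1"
    using HB_point[OF mp(1)] by blast
  have hd: "h \<in> dual_space" unfolding dual_space_def using lin_cont[OF L Wo Wc W0 h(1) h(2)] h(1) by simp
  obtain s where s: "s > 0" "s *\<^sub>R y1 \<in> V" using lcs_absorb[OF L V(1) V(3)] by blast
  have "h d < 1 + h d0 - s" if d: "d \<in> D" for d
  proof -
    have "d - d0 + s *\<^sub>R y1 \<in> W" unfolding W_def using d s by blast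
    then have "h (d - d0 + s *\<^sub>R y1) < 1" using h(2) mp(2) by (meson le_less_trans)
    then have "h d - h d0 + s * h y1 < 1" using h(1) by (simp add: linear_add linear_diff linear_cmul)
    moreover have "s \<le> s * h y1" using s(1) h(3) by simp
    ultimately show ?thesis by linarith
  qed
  moreover have "h x0 = h y1 + h d0" unfolding y1_def using h(1) by (simp add: linear_diff)
  ultimately show ?thesis using hd s(1) h(3)
    by (intro exI[of _ h] exI[of _ "1 + h d0 - s"]) force
qed



lemma conaff_Hat: "conaff (Hat h) r zs y = (if h y \<le> r then UNIV else {})"
  unfolding conaff_def by auto

lemma zero_dual: "(\<lambda>_. 0) \<in> dual_space"
  unfolding dual_space_def by (simp add: linear_zero)

lemma recession:
  fixes g :: "'x::{real_vector,topological_space} \<Rightarrow> 'z::{real_vector,topological_space} set"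
  assumes L: "lcs TYPE('x)" and cl: "closed (graph g)" and cv: "convex (graph g)"
    and x1: "g x1 = UNIV" and z: "z \<in> g y"
  shows "g y = UNIV"
proof (rule ccontr)
  assume "g y \<noteq> UNIV"
  then obtain w where w: "w \<notin> g y" by blast
  define f where "f t = ((1 - t) *\<^sub>R x1 + t *\<^sub>R y, w)" for t :: real
  have fc: "continuous_on UNIV f" unfolding f_def
    by (intro continuous_on_Pair lcs_cont_add[OF L] lcs_cont_scale[OF L] continuous_intros)
  have "open (f -` (- graph g))" using cl by (intro open_vimage fc) auto
  moreover have "1 \<in> f -` (- graph g)" using w unfolding f_def graph_def by simp
  ultimately obtain e where e: "e > 0" "ball 1 e \<subseteq> f -` (- graph g)"
    using open_contains_ball by blast
  define t where "t = 1 - min (e/2) (1/2)"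
  have t: "0 < t" "t < 1" "t \<in> ball 1 e" using e(1) unfolding t_def by (auto simp: dist_real_def)
  then have nf: "f t \<notin> graph g" using e(2) by blast
  define w1 where "w1 = (1/(1-t)) *\<^sub>R (w - t *\<^sub>R z)"
  have "(1 - t) *\<^sub>R (x1, w1) + t *\<^sub>R (y, z) \<in> graph g"
    using t x1 z by (intro convexD[OF cv]) (auto simp: graph_def)
  moreover have "(1 - t) *\<^sub>R (x1, w1) + t *\<^sub>R (y, z) = f t"
  proof -
    have "(1 - t) *\<^sub>R w1 = w - t *\<^sub>R z" unfolding w1_def using t by simp
    then show ?thesis unfolding f_def by simp
  qed
  ultimately show False using nf by simp
qed

theorem mainTheorem18:
  fixes C :: "'z::{real_vector,t2_space} set"
    and g :: "'x::{real_vector,t2_space} \<Rightarrow> 'z set"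
  assumes X_lcs: "lcs TYPE('x)"
    and Z_lcs: "lcs TYPE('z)"
    and X_nontriv: "\<exists>x::'x. x \<noteq> 0"
    and C_cone: "convex_cone C"
    and C_neg: "neg_dual_cone C \<noteq> {\<lambda>_. 0}"
    and g_Q: "\<forall>x. g x \<in> Qtri C"
    and g_improper: "\<not> proper_sv g"
    and g_closed: "closed (graph g)"
    and g_convex: "convex (graph g)"
  shows "(\<forall>x. g x = \<Inter> {conaff (Hat xs) r zs x | xs r zs.
              xs \<in> dual_space \<and> zs \<in> neg_dual_cone C - {\<lambda>_. 0} \<and>
              (\<forall>y. g y \<subseteq> conaff (Hat xs) r zs y)})
       \<and> ((\<exists>x. g x \<noteq> UNIV) \<longrightarrow>
          (\<exists>xs zs r. xs \<in> dual_space - {\<lambda>_. 0} \<and> zs \<in> neg_dual_cone C - {\<lambda>_. 0} \<and>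
             (\<forall>x. g x \<subseteq> conaff (Hat xs) r zs x)))"
proof -
  have NC0: "(\<lambda>_. 0) \<in> neg_dual_cone C" unfolding neg_dual_cone_def using zero_dual by simp
  obtain zs where zs: "zs \<in> neg_dual_cone C - {\<lambda>_. 0}" using C_neg NC0 by blast
  define D where "D = {y. g y \<noteq> {}}"
  have vals: "g y = {} \<or> g y = UNIV" for y
  proof (cases "D = {}")
    case True then show ?thesis unfolding D_def by auto
  next
    case False
    then have "dom_sv g \<noteq> {}" unfolding D_def dom_sv_def by auto
    then obtain x1 where x1: "g x1 = UNIV" using g_improper unfolding proper_sv_def by blast
    show ?thesis using recession[OF X_lcs g_closed g_convex x1] by blast
  qed
  have Deq: "D = (\<lambda>y. (y, 0::'z)) -` graph g"
    unfolding D_def graph_def using vals by auto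
  have Dcl: "closed D" unfolding Deq
    by (intro closed_vimage g_closed continuous_on_Pair continuous_on_id continuous_on_const)
  have Dcv: "convex D" unfolding Deq
  proof (rule convexI)
    fix u v :: 'x and a b :: real
    assume "u \<in> (\<lambda>y. (y, 0::'z)) -` graph g" "v \<in> (\<lambda>y. (y, 0::'z)) -` graph g" "0 \<le> a" "0 \<le> b" "a + b = 1"
    then have "a *\<^sub>R (u, 0::'z) + b *\<^sub>R (v, 0) \<in> graph g" by (intro convexD[OF g_convex]) auto
    then show "a *\<^sub>R u + b *\<^sub>R v \<in> (\<lambda>y. (y, 0::'z)) -` graph g" by simp
  qed
  have DU: "y \<in> D \<Longrightarrow> g y = UNIV" for y using vals unfolding D_def by auto
  have DE: "y \<notin> D \<Longrightarrow> g y = {}" for y unfolding D_def by auto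
  have sep: "\<exists>h r. h \<in> dual_space \<and> (\<forall>y. g y \<subseteq> conaff (Hat h) r zs y) \<and> r < h x \<and> (D \<noteq> {} \<longrightarrow> h \<noteq> (\<lambda>_. 0))"
    if x: "x \<notin> D" for x
  proof (cases "D = {}")
    case True
    show ?thesis using zero_dual DE True
      by (intro exI[of _ "\<lambda>_. 0"] exI[of _ "-1"]) auto
  next
    case False
    then obtain d0 where d0: "d0 \<in> D" by blast
    obtain h r where h: "h \<in> dual_space" "\<forall>d\<in>D. h d \<le> r" "r < h x"
      using separation[OF X_lcs Dcl Dcv d0 x] by blast
    have "g y \<subseteq> conaff (Hat h) r zs y" for y
      using h(2) DE[of y] unfolding conaff_Hat by (cases "h y \<le> r") auto
    moreover have "h \<noteq> (\<lambda>_. 0)" using h(2) h(3) d0 by force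
    ultimately show ?thesis using h by blast
  qed
  have P1: "g x = \<Inter> {conaff (Hat xs) r zs x | xs r zs.
              xs \<in> dual_space \<and> zs \<in> neg_dual_cone C - {\<lambda>_. 0} \<and>
              (\<forall>y. g y \<subseteq> conaff (Hat xs) r zs y)}" for x
  proof (cases "x \<in> D")
    case True
    then show ?thesis using DU[OF True] by blast
  next
    case False
    obtain h r where h: "h \<in> dual_space" "\<forall>y. g y \<subseteq> conaff (Hat h) r zs y" "r < h x"
      using sep[OF False] by blast
    have "conaff (Hat h) r zs x \<in> {conaff (Hat xs) r zs x | xs r zs.
              xs \<in> dual_space \<and> zs \<in> neg_dual_cone C - {\<lambda>_. 0} \<and>
              (\<forall>y. g y \<subseteq> conaff (Hat xs) r zs y)}" using h zs by blast
    moreover have "conaff (Hat h) r zs x = {}" using h(3) unfolding conaff_Hat by simp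
    ultimately show ?thesis using DE[OF False] by blast
  qed
  have P2: "\<exists>xs zs r. xs \<in> dual_space - {\<lambda>_. 0} \<and> zs \<in> neg_dual_cone C - {\<lambda>_. 0} \<and>
             (\<forall>x. g x \<subseteq> conaff (Hat xs) r zs x)" if ex: "\<exists>x. g x \<noteq> UNIV"
  proof (cases "D = {}")
    case False
    from ex obtain x where "g x \<noteq> UNIV" by blast
    then have "x \<notin> D" using DU by blast
    then obtain h r where h: "h \<in> dual_space" "\<forall>y. g y \<subseteq> conaff (Hat h) r zs y" "h \<noteq> (\<lambda>_. 0)"
      using sep False by blast
    then show ?thesis using zs by blast
  next
    case True
    obtain x0 :: 'x where x0: "x0 \<noteq> 0" using X_nontriv by blast
    have "x0 \<notin> {0}" using x0 by simp
    then obtain h r where h: "h \<in> dual_space" "\<forall>d\<in>{0::'x}. h d \<le> r" "r < h x0"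
      using separation[OF X_lcs closed_singleton[of 0] convex_singleton[of 0] singletonI[of 0]] by blast
    have "h \<noteq> (\<lambda>_. 0)" using h(2) h(3) by force
    moreover have "\<forall>x. g x \<subseteq> conaff (Hat h) r zs x" using DE True by auto
    ultimately show ?thesis using h(1) zs by blast
  qed
  show ?thesis using P1 P2 by blast
qed


end
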